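(* There is a universal constant $C>0$ such that the following holds. Let $U=(u^1,\dots,u^m)$ be a viscosity solution of the vectorial one-phase problem in $B_1\subset\mathbb R^n$ and let $\varepsilon>0$ be such that $$|U-f^1x_n^+|\le\varepsilon\quad\text{in } B_1,\qquad |U|\equiv0\quad\text{in } B_1\cap\{x_n<-\varepsilon\},$$ where $f^1=(1,0,\dots,0)\in\mathbb R^m$. Then (i) for $i=2,\dots,m$, $|u^i|\le C\varepsilon(x_n+\varepsilon)^+$ in $B_{3/4}$; (ii) $x_n-\varepsilon\le u^1\le|U|\le(x_n+2\varepsilon)^+$ in $B_1$.
   Context: $t^+=\max\{t,0\}$; $x_n$ is the last coordinate of $x\in\mathbb R^n$. Definition (viscosity solution): $U\in C(\Omega,\mathbb R^m)$ is a viscosity solution of $\Delta U=0$ in $\Omega(U):=\Omega\cap\{|U|>0\}$, $|\nabla|U||=1$ on $F(U):=\Omega\cap\partial\Omega(U)$, if each component $u^i$ is harmonic in $\Omega(U)$ and, for every $x_0\in F(U)$ and every $\varphi\in C^2$ near $x_0$ with $|\nabla\varphi(x_0)|\ne0$: (i) if $|\nabla\varphi(x_0)|>1$, then for every unit vector $f\in\mathbb R^m$, $\langle U,f\rangle$ cannot be touched by below by $\varphi$ at $x_0$ (i.e. there is no such $\varphi$ with $\varphi(x_0)=\langle U,f\rangle(x_0)$ and $\varphi\le\langle U,f\rangle$ near $x_0$); (ii) if $|\nabla\varphi(x_0)|<1$, then $|U|$ cannot be touched by above by $\varphi$ at $x_0$. Universal constants depend only on $n$ and $m$. *)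

theory Defs
  imports "HOL-Analysis.Analysis"
begin

text \<open>Coordinates: the index type is finite and linearly ordered; the last
coordinate x_n is the one at the largest index, and f^1 is the first basis vector.\<close>

definition last_idx :: "'n::{finite,linorder}" where
  "last_idx = Max UNIV"

definition first_idx :: "'m::{finite,linorder}" where
  "first_idx = Min UNIV"

definition xn :: "real ^ 'n::{finite,linorder} \<Rightarrow> real" where
  "xn x = x $ last_idx"

definition e1 :: "real ^ 'm::{finite,linorder}" where
  "e1 = axis first_idx 1"

definition partial :: "'n::finite \<Rightarrow> (real ^ 'n \<Rightarrow> real) \<Rightarrow> real ^ 'n \<Rightarrow> real" where
  "partial i \<phi> y = frechet_derivative \<phi> (at y) (axis i 1)"

definition grad :: "(real ^ 'n::finite \<Rightarrow> real) \<Rightarrow> real ^ 'n \<Rightarrow> real ^ 'n" where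
  "grad \<phi> x = (\<chi> i. partial i \<phi> x)"

definition laplacian :: "(real ^ 'n::finite \<Rightarrow> real) \<Rightarrow> real ^ 'n \<Rightarrow> real" where
  "laplacian \<phi> x = (\<Sum>i\<in>UNIV. partial i (partial i \<phi>) x)"

definition C2_on :: "(real ^ 'n::finite) set \<Rightarrow> (real ^ 'n \<Rightarrow> real) \<Rightarrow> bool" where
  "C2_on S \<phi> \<longleftrightarrow>
     (\<forall>x\<in>S. \<phi> differentiable (at x)) \<and>
     (\<forall>i. \<forall>x\<in>S. partial i \<phi> differentiable (at x)) \<and>
     (\<forall>i j. continuous_on S (partial j (partial i \<phi>)))"

definition harmonic_on :: "(real ^ 'n::finite) set \<Rightarrow> (real ^ 'n \<Rightarrow> real) \<Rightarrow> bool" where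
  "harmonic_on S u \<longleftrightarrow> C2_on S u \<and> (\<forall>x\<in>S. laplacian u x = 0)"

definition viscosity_solution ::
    "(real ^ 'n::finite) set \<Rightarrow> (real ^ 'n \<Rightarrow> real ^ 'm::finite) \<Rightarrow> bool" where
  "viscosity_solution \<Omega> U \<longleftrightarrow>
     continuous_on \<Omega> U \<and>
     (\<forall>i. harmonic_on (\<Omega> \<inter> {x. norm (U x) > 0}) (\<lambda>x. U x $ i)) \<and>
     (\<forall>x0 \<in> \<Omega> \<inter> frontier (\<Omega> \<inter> {x. norm (U x) > 0}).
        \<forall>\<phi> r. r > 0 \<longrightarrow> C2_on (ball x0 r) \<phi> \<longrightarrow> grad \<phi> x0 \<noteq> 0 \<longrightarrow>
          (norm (grad \<phi> x0) > 1 \<longrightarrow>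
             (\<forall>f::real ^ 'm. norm f = 1 \<longrightarrow>
                \<not> (\<phi> x0 = U x0 \<bullet> f \<and> (\<forall>x \<in> ball x0 r \<inter> \<Omega>. \<phi> x \<le> U x \<bullet> f)))) \<and>
          (norm (grad \<phi> x0) < 1 \<longrightarrow>
             \<not> (\<phi> x0 = norm (U x0) \<and> (\<forall>x \<in> ball x0 r \<inter> \<Omega>. norm (U x) \<le> \<phi> x))))"

end

theory Submission
  imports Defs
begin

lemma oned:
  fixes f f' :: "real \<Rightarrow> real"
  assumes r: "r > 0" and der: "\<forall>s. \<bar>s\<bar> < r \<longrightarrow> (f has_real_derivative f' s) (at s)"
    and der2: "(f' has_real_derivative d) (at 0)" and d: "d > 0"
  shows "\<exists>s. \<bar>s\<bar> < r \<and> f s > f 0"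
proof (rule ccontr)
  assume "\<not> ?thesis"
  hence le: "\<forall>s. \<bar>s\<bar> < r \<longrightarrow> f s \<le> f 0" by auto
  have "f' 0 = 0"
    by (rule DERIV_local_max[OF der[rule_format, of 0] r]) (use le r in auto)
  obtain e where e: "e > 0" "\<forall>h>0. h < e \<longrightarrow> f' 0 < f' (0 + h)"
    using DERIV_pos_inc_right[OF der2 d] by auto
  define h where "h = min e r / 2"
  have h: "0 < h" "h < e" "h < r" using e r by (auto simp: h_def)
  obtain z where z: "0 < z" "z < h" "f h - f 0 = (h - 0) * f' z"
    using MVT2[of 0 h f f'] h der by force
  have "f' z > 0" using e z h \<open>f' 0 = 0\<close> by auto
  hence "f h > f 0" using z h by (simp add: algebra_simps)
  moreover have "f h \<le> f 0" using le h by auto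
  ultimately show False by simp
qed

lemma line_deriv:
  fixes w :: "real ^ 'n::finite \<Rightarrow> real"
  assumes "w differentiable (at (y + s *\<^sub>R e))"
  shows "((\<lambda>t. w (y + t *\<^sub>R e)) has_real_derivative frechet_derivative w (at (y + s *\<^sub>R e)) e) (at s)"
proof -
  let ?D = "frechet_derivative w (at (y + s *\<^sub>R e))"
  have dw: "(w has_derivative ?D) (at (y + s *\<^sub>R e))"
    using assms frechet_derivative_works by blast
  have dl: "((\<lambda>t. y + t *\<^sub>R e) has_derivative (\<lambda>h. h *\<^sub>R e)) (at s)"
    by (auto intro!: derivative_eq_intros)
  have "((\<lambda>t. w (y + t *\<^sub>R e)) has_derivative (\<lambda>h. ?D (h *\<^sub>R e))) (at s)"
    using has_derivative_compose[OF dl dw] by (simp add: o_def)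
  moreover have "linear ?D" using dw has_derivative_linear by blast
  hence "(\<lambda>h. ?D (h *\<^sub>R e)) = (\<lambda>h. ?D e * h)"
    by (auto simp: linear_scale)
  ultimately show ?thesis
    by (simp add: has_field_derivative_def)
qed

lemma no_local_max:
  fixes w p :: "real ^ 'n::finite \<Rightarrow> real"
  assumes S: "open S" "y \<in> S" and dw: "\<forall>x\<in>S. w differentiable (at x)"
    and dpw: "\<forall>j. partial j w differentiable (at y)" and lap: "laplacian w y = 0"
    and pq: "\<forall>j s. p (y + s *\<^sub>R axis j 1) = p y + B j * s + A j * s^2"
    and Apos: "sum A UNIV > 0" and r: "r > 0"
  shows "\<exists>x\<in>ball y r. \<sigma> * w x + p x > \<sigma> * w y + p y"
proof -
  have "sum (\<lambda>j. \<sigma> * partial j (partial j w) y + 2 * A j) UNIV = \<sigma> * laplacian w y + 2 * sum A UNIV"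
    by (simp add: laplacian_def sum.distrib sum_distrib_left)
  hence "sum (\<lambda>j. \<sigma> * partial j (partial j w) y + 2 * A j) UNIV > 0" using lap Apos by simp
  then obtain j where dj: "\<sigma> * partial j (partial j w) y + 2 * A j > 0"
    by (meson not_less sum_nonpos)
  obtain r0 where r0: "r0 > 0" "ball y r0 \<subseteq> S" using S open_contains_ball by blast
  define R where "R = min r r0"
  have R: "R > 0" "R \<le> r" "R \<le> r0" using r r0 by (auto simp: R_def)
  define e :: "real ^ 'n" where "e = axis j 1"
  have inb: "y + s *\<^sub>R e \<in> ball y R" if "\<bar>s\<bar> < R" for s
    using that by (simp add: e_def dist_norm)
  define f where "f s = \<sigma> * w (y + s *\<^sub>R e) + (p y + B j * s + A j * s^2)" for s
  define f' where "f' s = \<sigma> * partial j w (y + s *\<^sub>R e) + (B j + 2 * A j * s)" for s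
  have fd: "(f has_real_derivative f' s) (at s)" if "\<bar>s\<bar> < R" for s
  proof -
    have "y + s *\<^sub>R e \<in> S" using inb[OF that] R r0 by auto
    hence "w differentiable (at (y + s *\<^sub>R e))" using dw by auto
    from line_deriv[OF this] have "((\<lambda>t. w (y + t *\<^sub>R e)) has_real_derivative partial j w (y + s *\<^sub>R e)) (at s)"
      by (simp add: partial_def e_def)
    then show ?thesis unfolding f_def f'_def
      by (auto intro!: derivative_eq_intros)
  qed
  have fd2: "(f' has_real_derivative (\<sigma> * partial j (partial j w) y + 2 * A j)) (at 0)"
  proof -
    have "partial j w differentiable (at (y + 0 *\<^sub>R e))" using dpw by simp
    from line_deriv[OF this] have "((\<lambda>t. partial j w (y + t *\<^sub>R e)) has_real_derivative partial j (partial j w) y) (at 0)"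
      by (simp add: partial_def e_def)
    then show ?thesis unfolding f'_def
      by (auto intro!: derivative_eq_intros)
  qed
  obtain s where s: "\<bar>s\<bar> < R" "f s > f 0"
    using oned[OF R(1) _ fd2 dj] fd by blast
  have "f s = \<sigma> * w (y + s *\<^sub>R e) + p (y + s *\<^sub>R e)" "f 0 = \<sigma> * w y + p y"
    using pq by (auto simp: f_def e_def)
  moreover have "y + s *\<^sub>R e \<in> ball y r" using inb[OF s(1)] R by auto
  ultimately show ?thesis using s by auto
qed

lemma box_comparison:
  fixes U :: "real ^ 'n::{finite,linorder} \<Rightarrow> real ^ 'm::finite"
  assumes vs: "viscosity_solution (ball 0 1) U" and ep: "\<epsilon> > 0"
    and bnd: "\<forall>x\<in>ball 0 1. \<bar>U x $ i\<bar> \<le> \<epsilon>"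
    and zero: "\<forall>x\<in>ball 0 1. xn x \<le> - \<epsilon> \<longrightarrow> U x = 0"
    and xb: "xb \<in> ball 0 (3/4)" and t0: "0 < xn xb + \<epsilon>"
    and t1: "xn xb + \<epsilon> < 1 / (8 * real CARD('n))"
    and sg: "\<bar>\<sigma>\<bar> = 1"
  shows "\<sigma> * U xb $ i \<le> 16 * real CARD('n)^2 * \<epsilon> * (xn xb + \<epsilon>)"
proof -
  define N where "N = real CARD('n)"
  have N1: "N \<ge> 1" by (simp add: N_def)
  define L :: 'n where "L = last_idx"
  define \<rho> where "\<rho> = 1 / (8 * N)"
  define \<beta> where "\<beta> = 128 * N^2"
  define a where "a = 16 * N^2"
  have rho: "\<rho> > 0" "a * \<rho> = 2 * N" "\<beta> * \<rho>^2 = 2" "\<beta> * \<rho> = 16 * N"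
    using N1 by (auto simp: \<rho>_def \<beta>_def a_def power2_eq_square field_simps)
  have xnL: "xn x = x $ L" for x :: "real ^ 'n::{finite,linorder}" by (simp add: xn_def L_def)
  define Q where "Q j s = (if j = L then a * (s + \<epsilon>) - \<beta> * (N - 1) * (s + \<epsilon>)^2 else \<beta> * (s - xb $ j)^2)" for j s
  define v where "v x = \<epsilon> * (\<Sum>j\<in>UNIV. Q j (x $ j))" for x
  define lo :: "real ^ 'n::{finite,linorder}" where "lo = (\<chi> j. if j = L then - \<epsilon> else xb $ j - \<rho>)"
  define hi :: "real ^ 'n::{finite,linorder}" where "hi = (\<chi> j. if j = L then \<rho> - \<epsilon> else xb $ j + \<rho>)"
  define K where "K = cbox lo hi"
  have memK: "x \<in> K \<longleftrightarrow> (\<forall>j. lo$j \<le> x$j \<and> x$j \<le> hi$j)" for x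
    unfolding K_def by (rule mem_box_cart(2))
  have tb: "0 < xb $ L + \<epsilon>" "xb $ L + \<epsilon> < \<rho>" using t0 t1 by (auto simp: xnL \<rho>_def N_def)
  have F1: "\<bar>x $ j - xb $ j\<bar> \<le> \<rho>" if "x \<in> K" for x j
    using that tb unfolding memK by (cases "j = L") (auto simp: lo_def hi_def abs_le_iff dest!: spec[of _ j])
  have F2: "x \<in> ball 0 1" if "x \<in> K" for x
  proof -
    have "norm (x - xb) \<le> (\<Sum>j\<in>UNIV. \<bar>(x - xb) $ j\<bar>)" by (rule norm_le_l1_cart)
    also have "\<dots> \<le> (\<Sum>j\<in>(UNIV::'n::{finite,linorder} set). \<rho>)" using F1[OF that] by (intro sum_mono) auto
    also have "\<dots> = 1/8" using N1 by (simp add: \<rho>_def N_def)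
    finally have "norm (x - xb) \<le> 1/8" .
    moreover have "norm xb < 3/4" using xb by simp
    ultimately have "norm x < 1" using norm_triangle_ineq[of "x - xb" xb] by simp
    thus ?thesis by simp
  qed
  have QL: "0 \<le> Q L s" if "0 \<le> s + \<epsilon>" "s + \<epsilon> \<le> \<rho>" for s
  proof -
    have "\<beta> * (N - 1) * (s + \<epsilon>) \<le> \<beta> * (N - 1) * \<rho>"
      using that N1 by (intro mult_left_mono) (auto simp: \<beta>_def)
    also have "\<dots> \<le> a" using rho(4) N1 by (simp add: a_def algebra_simps power2_eq_square)
    finally have "0 \<le> a - \<beta> * (N - 1) * (s + \<epsilon>)" by simp
    hence "0 \<le> (s + \<epsilon>) * (a - \<beta> * (N - 1) * (s + \<epsilon>))" using that by simp
    thus ?thesis by (simp add: Q_def power2_eq_square algebra_simps)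
  qed
  have F3: "0 \<le> Q j (x $ j)" if "x \<in> K" for x j
  proof (cases "j = L")
    case True
    then show ?thesis using that QL unfolding memK by (auto simp: lo_def hi_def dest!: spec[of _ L])
  next
    case False
    then show ?thesis by (simp add: Q_def \<beta>_def)
  qed
  have v0: "0 \<le> v x" if "x \<in> K" for x
    unfolding v_def using F3[OF that] ep by (simp add: sum_nonneg)
  have vface: "2 * \<epsilon> \<le> v x" if "x \<in> K" "Q j (x $ j) = 2" for x j
  proof -
    have "2 \<le> (\<Sum>j\<in>UNIV. Q j (x $ j))"
      using member_le_sum[of j UNIV "\<lambda>j. Q j (x $ j)"] F3[OF that(1)] that(2) by simp
    thus ?thesis using ep by (simp add: v_def)
  qed
  have top: "Q L (\<rho> - \<epsilon>) = 2"
  proof -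
    have "Q L (\<rho> - \<epsilon>) = a * \<rho> - (N - 1) * (\<beta> * \<rho>^2)" by (simp add: Q_def)
    also have "\<dots> = 2" using rho by simp
    finally show ?thesis .
  qed
  have side: "Q j (xb $ j + \<rho>) = 2" "Q j (xb $ j - \<rho>) = 2" if "j \<noteq> L" for j
    using that rho by (auto simp: Q_def)
  have vxb: "v xb \<le> a * \<epsilon> * (xn xb + \<epsilon>)"
  proof -
    have "(\<Sum>j\<in>UNIV. Q j (xb $ j)) = (\<Sum>j\<in>UNIV. if j = L then Q L (xb $ L) else 0)"
      by (rule sum.cong) (auto simp: Q_def)
    also have "\<dots> = Q L (xb $ L)" by simp
    also have "\<dots> \<le> a * (xb $ L + \<epsilon>)" by (simp add: Q_def \<beta>_def N1)
    finally show ?thesis using ep by (simp add: v_def xnL mult_left_mono mult.assoc)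
  qed
  define w where "w = (\<lambda>x. U x $ i)"
  define D where "D = ball 0 1 \<inter> {x. norm (U x) > 0}"
  have cU: "continuous_on (ball 0 1) U" using vs by (simp add: viscosity_solution_def)
  have harm: "harmonic_on D w" using vs by (simp add: viscosity_solution_def D_def w_def)
  have wb: "\<sigma> * w x \<le> \<epsilon>" if "x \<in> K" for x
  proof -
    have "\<bar>\<sigma> * w x\<bar> \<le> \<epsilon>" using bnd F2[OF that] sg by (simp add: w_def abs_mult)
    thus ?thesis by simp
  qed
  have xbK: "xb \<in> K" unfolding memK using tb rho by (auto simp: lo_def hi_def)
  have "\<sigma> * w xb \<le> v xb"
  proof (rule ccontr)
    assume "\<not> ?thesis"
    define M where "M = \<sigma> * w xb - v xb"
    have M: "M > 0" using \<open>\<not> _\<close> by (simp add: M_def)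
    define \<delta> where "\<delta> = M / (2 * N)"
    have dl: "\<delta> > 0" "\<delta> * N = M / 2" using M N1 by (auto simp: \<delta>_def)
    define P where "P j s = \<delta> * s^2 - \<epsilon> * Q j s" for j s
    define p where "p x = (\<Sum>j\<in>UNIV. P j (x $ j))" for x :: "real ^ 'n::{finite,linorder}"
    have pv: "p x = \<delta> * (\<Sum>j\<in>UNIV. (x $ j)^2) - v x" for x
      by (simp add: p_def P_def v_def sum_subtractf sum_distrib_left)
    have sq: "(\<Sum>j\<in>UNIV. (x $ j)^2) \<le> N" if "x \<in> K" for x
    proof -
      have "(x $ j)^2 \<le> 1" for j
      proof -
        have "\<bar>x $ j\<bar> \<le> norm x" by (rule component_le_norm_cart)
        also have "\<dots> < 1" using F2[OF that] by simp
        finally show ?thesis by (simp add: abs_square_le_1)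
      qed
      hence "(\<Sum>j\<in>UNIV. (x $ j)^2) \<le> (\<Sum>j\<in>(UNIV::'n::{finite,linorder} set). 1)" by (intro sum_mono) auto
      thus ?thesis by (simp add: N_def)
    qed
    define g where "g x = \<sigma> * w x + p x" for x
    have gle: "g x \<le> \<sigma> * w x - v x + M / 2" if "x \<in> K" for x
    proof -
      have "\<delta> * (\<Sum>j\<in>UNIV. (x $ j)^2) \<le> \<delta> * N" using sq[OF that] dl by (intro mult_left_mono) auto
      thus ?thesis using dl by (simp add: g_def pv)
    qed
    have gxb: "M \<le> g xb"
    proof -
      have "0 \<le> \<delta> * (\<Sum>j\<in>UNIV. (xb $ j)^2)" using dl by (simp add: sum_nonneg)
      thus ?thesis by (simp add: g_def pv M_def)
    qed
    have KB: "K \<subseteq> ball 0 1" using F2 by auto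
    have cg: "continuous_on K g"
    proof -
      have "continuous_on K w" unfolding w_def
        by (intro continuous_on_component continuous_on_subset[OF cU KB])
      moreover have "continuous_on K p" unfolding p_def
      proof (intro continuous_on_sum)
        fix j :: "'n::{finite,linorder}"
        have cj: "continuous_on K (\<lambda>x::real ^ 'n::{finite,linorder}. x $ j)"
          by (intro continuous_on_component continuous_on_id)
        show "continuous_on K (\<lambda>x. P j (x $ j))"
          unfolding P_def Q_def by (cases "j = L") (simp_all add: cj continuous_intros)
      qed
      ultimately show ?thesis unfolding g_def by (intro continuous_intros)
    qed
    obtain y where yK: "y \<in> K" and ymax: "\<forall>x\<in>K. g x \<le> g y"
      using continuous_attains_sup[OF _ _ cg] xbK by (auto simp: K_def)
    have "g xb \<le> g y" using ymax xbK by blast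
    hence key: "M / 2 \<le> \<sigma> * w y - v y" using gle[OF yK] gxb by linarith
    have Uy: "U y \<noteq> 0"
    proof
      assume "U y = 0"
      hence "w y = 0" by (simp add: w_def)
      thus False using key v0[OF yK] M by simp
    qed
    have yL: "xn y > - \<epsilon>"
    proof (rule ccontr)
      assume "\<not> xn y > - \<epsilon>"
      hence "xn y \<le> - \<epsilon>" by simp
      hence "U y = 0" using zero F2[OF yK] by blast
      thus False using Uy by simp
    qed
    have noface: "2 * \<epsilon> \<le> v y \<Longrightarrow> False" using key wb[OF yK] M ep by simp
    have yK': "lo $ j \<le> y $ j \<and> y $ j \<le> hi $ j" for j using yK memK by blast
    have ybox: "y \<in> box lo hi"
      unfolding mem_box_cart
    proof
      fix j
      show "lo $ j < y $ j \<and> y $ j < hi $ j"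
      proof (cases "j = L")
        case True
        have ne: "y $ L \<noteq> \<rho> - \<epsilon>"
        proof
          assume "y $ L = \<rho> - \<epsilon>"
          hence "Q L (y $ L) = 2" using top by simp
          thus False using noface vface[OF yK] by blast
        qed
        have "lo $ L = - \<epsilon>" "hi $ L = \<rho> - \<epsilon>" by (simp_all add: lo_def hi_def)
        moreover have "xn y = y $ L" by (rule xnL)
        ultimately show ?thesis using True yK'[of L] yL ne by auto
      next
        case False
        have ne: "y $ j \<noteq> xb $ j + \<rho>" "y $ j \<noteq> xb $ j - \<rho>"
        proof -
          show "y $ j \<noteq> xb $ j + \<rho>"
          proof
            assume "y $ j = xb $ j + \<rho>"
            hence "Q j (y $ j) = 2" using side[OF False] by simp
            thus False using noface vface[OF yK] by blast
          qed
          show "y $ j \<noteq> xb $ j - \<rho>"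
          proof
            assume "y $ j = xb $ j - \<rho>"
            hence "Q j (y $ j) = 2" using side[OF False] by simp
            thus False using noface vface[OF yK] by blast
          qed
        qed
        have "lo $ j = xb $ j - \<rho>" "hi $ j = xb $ j + \<rho>" using False by (simp_all add: lo_def hi_def)
        then show ?thesis using yK'[of j] ne by auto
      qed
    qed
    have oD: "open D"
    proof -
      have cn: "continuous_on (ball 0 1) (\<lambda>x. norm (U x))" by (intro continuous_on_norm cU)
      obtain A where A: "open A" "A \<inter> ball 0 1 = {x\<in>ball 0 1. 0 < norm (U x)}"
        using open_Collect_less_Int[OF continuous_on_const cn] by blast
      have "D = {x\<in>ball 0 1. 0 < norm (U x)}" unfolding D_def by blast
      hence "D = A \<inter> ball 0 1" using A(2) by simp
      thus ?thesis using A(1) by (simp add: open_Int)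
    qed
    define S where "S = box lo hi \<inter> D"
    have oS: "open S" using oD by (simp add: S_def open_Int open_box)
    have yS: "y \<in> S" using ybox Uy F2[OF yK] by (simp add: S_def D_def)
    obtain r where r: "r > 0" "ball y r \<subseteq> S" using oS yS open_contains_ball by blast
    have SK: "S \<subseteq> K" using box_subset_cbox by (auto simp: S_def K_def)
    have C2: "C2_on D w" "laplacian w y = 0" using harm yS by (auto simp: harmonic_on_def S_def)
    define A where "A j = \<delta> - \<epsilon> * (if j = L then - (\<beta> * (N - 1)) else \<beta>)" for j
    define B where "B j = 2 * \<delta> * y $ j - \<epsilon> * (if j = L then a - 2 * \<beta> * (N - 1) * (y $ j + \<epsilon>) else 2 * \<beta> * (y $ j - xb $ j))" for j
    have pq: "\<forall>j s. p (y + s *\<^sub>R axis j 1) = p y + B j * s + A j * s^2"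
    proof (intro allI)
      fix j s
      have comp: "(y + s *\<^sub>R axis j 1) $ k = y $ k + (if k = j then s else 0)" for k
        by (simp add: axis_def)
      have "p (y + s *\<^sub>R axis j 1) = (\<Sum>k\<in>UNIV. P k (y $ k) + (if k = j then P j (y $ j + s) - P j (y $ j) else 0))"
        unfolding p_def by (rule sum.cong) (auto simp: comp axis_def)
      also have "\<dots> = p y + (P j (y $ j + s) - P j (y $ j))" by (simp add: sum.distrib p_def)
      also have "P j (y $ j + s) - P j (y $ j) = B j * s + A j * s^2"
        by (cases "j = L") (simp_all add: P_def Q_def A_def B_def power2_eq_square algebra_simps)
      finally show "p (y + s *\<^sub>R axis j 1) = p y + B j * s + A j * s^2" by simp
    qed
    have sumif: "(\<Sum>j\<in>UNIV. if j = L then c else \<beta>) = c + (N - 1) * \<beta>" for c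
    proof -
      have "(\<Sum>j\<in>UNIV. if j = L then c else \<beta>) = (if L = L then c else \<beta>) + (\<Sum>j\<in>UNIV - {L}. if j = L then c else \<beta>)"
        by (rule sum.remove) auto
      also have "(\<Sum>j\<in>UNIV - {L}. if j = L then c else \<beta>) = (\<Sum>j\<in>UNIV - {L}. \<beta>)" by (rule sum.cong) auto
      also have "\<dots> = (N - 1) * \<beta>" using N1 by (simp add: N_def of_nat_diff card_Diff_singleton)
      finally show ?thesis by simp
    qed
    have Apos: "sum A UNIV > 0"
    proof -
      have "sum A UNIV = N * \<delta> - \<epsilon> * (\<Sum>j\<in>UNIV. if j = L then - (\<beta> * (N - 1)) else \<beta>)"
        by (simp add: A_def sum_subtractf sum_distrib_left[symmetric] N_def)
      also have "\<dots> = N * \<delta>" using sumif[of "- (\<beta> * (N - 1))"] by (simp add: algebra_simps del: sumif)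
      finally show ?thesis using dl N1 by simp
    qed
    have SD: "S \<subseteq> D" by (auto simp: S_def)
    have dwS: "\<forall>x\<in>S. w differentiable (at x)" using C2(1) SD unfolding C2_on_def by blast
    have dpw: "\<forall>j. partial j w differentiable (at y)" using C2(1) SD yS unfolding C2_on_def by blast
    obtain x where x: "x \<in> ball y r" "\<sigma> * w x + p x > \<sigma> * w y + p y"
      using no_local_max[OF oS yS dwS dpw C2(2) pq Apos r(1), of \<sigma>] by blast
    have "x \<in> K" using x r SK by auto
    thus False using ymax x by (auto simp: g_def)
  qed
  moreover have "a * \<epsilon> * (xn xb + \<epsilon>) = 16 * real CARD('n)^2 * \<epsilon> * (xn xb + \<epsilon>)"
    by (simp add: a_def N_def)
  ultimately show ?thesis using vxb unfolding w_def by linarith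
qed

lemma zero_closed:
  fixes U :: "real ^ 'n::{finite,linorder} \<Rightarrow> real ^ 'm::finite"
  assumes cU: "continuous_on (ball 0 1) U"
    and z: "\<forall>x\<in>ball 0 1. xn x < - \<epsilon> \<longrightarrow> U x = 0"
  shows "\<forall>x\<in>ball 0 1. xn x \<le> - \<epsilon> \<longrightarrow> U x = 0"
proof (intro ballI impI)
  fix x :: "real ^ 'n::{finite,linorder}" assume x: "x \<in> ball 0 1" and le: "xn x \<le> - \<epsilon>"
  show "U x = 0"
  proof (rule ccontr)
    assume nz: "U x \<noteq> 0"
    obtain d where d: "d > 0" "\<forall>x'\<in>ball 0 1. dist x' x < d \<longrightarrow> dist (U x') (U x) < norm (U x)"
      using cU x nz unfolding continuous_on_iff by (meson zero_less_norm_iff)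
    define s where "s = min (d/2) ((1 - norm x)/2)"
    have nx: "norm x < 1" using x by simp
    have s1: "s \<le> (1 - norm x)/2" "s \<le> d/2" unfolding s_def by (rule min.cobounded2, rule min.cobounded1)
    have s: "0 < s" "s < d" "norm x + s < 1" using d nx s1 by (auto simp: s_def min_less_iff_conj)
    define x' where "x' = x - s *\<^sub>R axis last_idx 1"
    have "norm x' \<le> norm x + s" unfolding x'_def using norm_triangle_ineq4[of x "s *\<^sub>R axis last_idx 1"] s
      by simp
    hence x'b: "x' \<in> ball 0 1" using s by simp
    have "dist x' x < d" using s by (simp add: x'_def dist_norm)
    moreover have "xn x' < - \<epsilon>" using le s by (simp add: x'_def xn_def)
    ultimately show False using d x'b z by force
  qed
qed

lemma main_fixed:
  fixes U :: "real ^ 'n::{finite,linorder} \<Rightarrow> real ^ 'm::{finite,linorder}"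
  assumes vs: "viscosity_solution (ball 0 1) U" and ep: "\<epsilon> > 0"
    and H1: "\<forall>x\<in>ball 0 1. norm (U x - max (xn x) 0 *\<^sub>R e1) \<le> \<epsilon>"
    and H2: "\<forall>x\<in>ball 0 1. xn x < - \<epsilon> \<longrightarrow> U x = 0"
  shows "(\<forall>x\<in>ball 0 (3/4). \<forall>i. i \<noteq> first_idx \<longrightarrow> \<bar>U x $ i\<bar> \<le> (16 * real CARD('n)^2) * \<epsilon> * max (xn x + \<epsilon>) 0) \<and>
     (\<forall>x\<in>ball 0 1. xn x - \<epsilon> \<le> U x $ first_idx \<and> U x $ first_idx \<le> norm (U x) \<and>
                    norm (U x) \<le> max (xn x + 2 * \<epsilon>) 0)"
proof
  have cU: "continuous_on (ball 0 1) U" using vs by (simp add: viscosity_solution_def)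
  have zero: "\<forall>x\<in>ball 0 1. xn x \<le> - \<epsilon> \<longrightarrow> U x = 0" by (rule zero_closed[OF cU H2])
  have e1c: "e1 $ i = (if i = first_idx then 1 else 0)" for i :: "'m::{finite,linorder}"
    by (simp add: e1_def axis_def)
  have comp: "\<bar>U x $ i - max (xn x) 0 * e1 $ i\<bar> \<le> \<epsilon>" if "x \<in> ball 0 1" for x i
    using component_le_norm_cart[of "U x - max (xn x) 0 *\<^sub>R e1" i] H1 that by force
  define N where "N = real CARD('n)"
  have N1: "N \<ge> 1" by (simp add: N_def)
  show "\<forall>x\<in>ball 0 (3/4). \<forall>i. i \<noteq> first_idx \<longrightarrow> \<bar>U x $ i\<bar> \<le> (16 * real CARD('n)^2) * \<epsilon> * max (xn x + \<epsilon>) 0"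
  proof (intro ballI allI impI)
    fix x :: "real ^ 'n::{finite,linorder}" and i :: "'m::{finite,linorder}"
    assume x: "x \<in> ball 0 (3/4)" and i: "i \<noteq> first_idx"
    have x1: "x \<in> ball 0 1" using x by simp
    have bnd: "\<forall>x\<in>ball 0 1. \<bar>U x $ i\<bar> \<le> \<epsilon>"
    proof
      fix y :: "real ^ 'n::{finite,linorder}" assume "y \<in> ball 0 1"
      from comp[OF this, of i] show "\<bar>U y $ i\<bar> \<le> \<epsilon>" using i by (simp add: e1c)
    qed
    have C0: "0 \<le> 16 * N^2" by simp
    consider "xn x + \<epsilon> \<le> 0" | "0 < xn x + \<epsilon>" "xn x + \<epsilon> < 1 / (8 * N)" | "1 / (8 * N) \<le> xn x + \<epsilon>" by linarith
    then show "\<bar>U x $ i\<bar> \<le> (16 * real CARD('n)^2) * \<epsilon> * max (xn x + \<epsilon>) 0"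
    proof cases
      case 1
      then have "U x = 0" using zero x1 by auto
      then show ?thesis using ep by simp
    next
      case 2
      have a: "1 * U x $ i \<le> 16 * N^2 * \<epsilon> * (xn x + \<epsilon>)"
        using box_comparison[OF vs ep bnd zero x 2(1), of 1] 2(2) by (simp add: N_def)
      have b: "(-1) * U x $ i \<le> 16 * N^2 * \<epsilon> * (xn x + \<epsilon>)"
        using box_comparison[OF vs ep bnd zero x 2(1), of "-1"] 2(2) by (simp add: N_def)
      show ?thesis using a b 2 by (simp add: N_def abs_le_iff)
    next
      case 3
      have "1 \<le> 16 * N^2 * (xn x + \<epsilon>)"
      proof -
        have "16 * N^2 * (1 / (8 * N)) \<le> 16 * N^2 * (xn x + \<epsilon>)" using 3 by (intro mult_left_mono) auto
        moreover have "16 * N^2 * (1 / (8 * N)) = 2 * N" using N1 by (simp add: power2_eq_square field_simps)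
        ultimately show ?thesis using N1 by linarith
      qed
      hence "\<epsilon> * 1 \<le> \<epsilon> * (16 * N^2 * (xn x + \<epsilon>))" using ep by (intro mult_left_mono) auto
      hence e: "\<epsilon> \<le> 16 * N^2 * \<epsilon> * (xn x + \<epsilon>)" by (simp add: mult_ac)
      have "0 < 1 / (8 * N)" using N1 by simp
      hence "0 < xn x + \<epsilon>" using 3 by linarith
      hence "max (xn x + \<epsilon>) 0 = xn x + \<epsilon>" by simp
      moreover have "\<bar>U x $ i\<bar> \<le> \<epsilon>" using bnd x1 by blast
      ultimately show ?thesis using e by (simp add: N_def)
    qed
  qed
  show "\<forall>x\<in>ball 0 1. xn x - \<epsilon> \<le> U x $ first_idx \<and> U x $ first_idx \<le> norm (U x) \<and>
                    norm (U x) \<le> max (xn x + 2 * \<epsilon>) 0"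
  proof (intro ballI conjI)
    fix x :: "real ^ 'n::{finite,linorder}" assume x: "x \<in> ball 0 1"
    show "xn x - \<epsilon> \<le> U x $ first_idx" using comp[OF x, of first_idx] e1c by (auto simp: abs_le_iff)
    show "U x $ first_idx \<le> norm (U x)" using component_le_norm_cart[of "U x" first_idx] by simp
    show "norm (U x) \<le> max (xn x + 2 * \<epsilon>) 0"
    proof (cases "xn x < - \<epsilon>")
      case True then show ?thesis using H2 x by simp
    next
      case False
      have "norm (U x) \<le> norm (U x - max (xn x) 0 *\<^sub>R (e1 :: real ^ 'm::{finite,linorder})) + norm (max (xn x) 0 *\<^sub>R (e1 :: real ^ 'm::{finite,linorder}))"
        using norm_triangle_sub[of "U x" "max (xn x) 0 *\<^sub>R (e1 :: real ^ 'm::{finite,linorder})"] by (simp add: add.commute)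
      also have "\<dots> \<le> \<epsilon> + max (xn x) 0" using H1 x by (simp add: e1_def)
      finally show ?thesis using False ep by linarith
    qed
  qed
qed

theorem lemma2p2:
  "\<exists>C>0. \<forall>(U :: real ^ 'n::{finite,linorder} \<Rightarrow> real ^ 'm::{finite,linorder}) (\<epsilon>::real).
     viscosity_solution (ball 0 1) U \<and> \<epsilon> > 0 \<and>
     (\<forall>x\<in>ball 0 1. norm (U x - max (xn x) 0 *\<^sub>R e1) \<le> \<epsilon>) \<and>
     (\<forall>x\<in>ball 0 1. xn x < - \<epsilon> \<longrightarrow> U x = 0)
     \<longrightarrow>
     (\<forall>x\<in>ball 0 (3/4). \<forall>i. i \<noteq> first_idx \<longrightarrow> \<bar>U x $ i\<bar> \<le> C * \<epsilon> * max (xn x + \<epsilon>) 0) \<and>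
     (\<forall>x\<in>ball 0 1. xn x - \<epsilon> \<le> U x $ first_idx \<and> U x $ first_idx \<le> norm (U x) \<and>
                    norm (U x) \<le> max (xn x + 2 * \<epsilon>) 0)"
  apply (rule exI[where x="16 * real CARD('n)^2"])
  apply (intro conjI)
   apply simp
  apply (intro allI impI)
  apply (elim conjE)
  apply (rule main_fixed)
     apply assumption+
  done

end
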